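(* Let $p,q>0$, $x\ge0$, $0\le y\le1$. Then both $y_k=B_{k,q}(x,y)$ and $y_k=\bar B_{k,q}(x,y)$ satisfy the four-term recurrence $$c_3y_{p+3}+c_2y_{p+2}+c_1y_{p+1}+c_0y_p=0,$$ where $$c_0=(p+q)y^2,\quad c_1=-y\left(p+1-\tfrac12xy+y(p+q)\right),\quad c_2=y\left(p+1-\tfrac12xy\right)-\tfrac12xy,\quad c_3=\tfrac12xy .$$
   Context: For $p,q>0$ and $0\le y\le 1$, $I_y(p,q)=\frac{1}{B(p,q)}\int_0^y t^{p-1}(1-t)^{q-1}\,dt$ is the regularized incomplete beta function, with $B(p,q)=\Gamma(p)\Gamma(q)/\Gamma(p+q)$. The cumulative noncentral beta distribution is $B_{p,q}(x,y)=e^{-x/2}\sum_{j=0}^\infty \frac{1}{j!}\left(\frac x2\right)^j I_y(p+j,q)$ for $x\ge0$, and its complement is $\bar B_{p,q}(x,y)=1-B_{p,q}(x,y)$. *)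

theory Defs
  imports "HOL-Analysis.Analysis"
begin

definition inc_beta_reg :: "real \<Rightarrow> real \<Rightarrow> real \<Rightarrow> real" where
  "inc_beta_reg p q y =
     integral {0..y} (\<lambda>t. t powr (p - 1) * (1 - t) powr (q - 1)) / Beta p q"

definition nc_beta :: "real \<Rightarrow> real \<Rightarrow> real \<Rightarrow> real \<Rightarrow> real" where
  "nc_beta p q x y =
     exp (- x / 2) * (\<Sum>j. (1 / fact j) * (x / 2) ^ j * inc_beta_reg (p + real j) q y)"

definition nc_beta_compl :: "real \<Rightarrow> real \<Rightarrow> real \<Rightarrow> real \<Rightarrow> real" where
  "nc_beta_compl p q x y = 1 - nc_beta p q x y"

end

theory Submission
  imports Defs
begin

definition JJ :: "real \<Rightarrow> real \<Rightarrow> real \<Rightarrow> real" where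
  "JJ a b y = integral {0..y} (\<lambda>t. t powr (a - 1) * (1 - t) powr (b - 1))"

lemma JJ_int:
  assumes "a > 0" "b > 0" "(y::real) \<le> 1"
  shows "(\<lambda>t. t powr (a - 1) * (1 - t) powr (b - 1)) integrable_on {0..y}"
proof -
  have "(\<lambda>t. t powr (a - 1) * (1 - t) powr (b - 1)) integrable_on {0..1}"
    using assms by (simp add: integrable_Beta')
  then show ?thesis by (rule integrable_on_subinterval) (use assms in auto)
qed

lemma JJ_bounds:
  assumes "a > 0" "b > 0" "0 \<le> (y::real)" "y \<le> 1"
  shows "0 \<le> JJ a b y" "JJ a b y \<le> Beta a b"
proof -
  show "0 \<le> JJ a b y" unfolding JJ_def
    by (intro integral_nonneg JJ_int) (use assms in auto)
  have "JJ a b y \<le> integral {0..1} (\<lambda>t. t powr (a - 1) * (1 - t) powr (b - 1))"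
    unfolding JJ_def
    by (intro integral_subset_le JJ_int integrable_Beta') (use assms in auto)
  also have "\<dots> = Beta a b" using has_integral_Beta_real[OF assms(1,2)] by (rule integral_unique)
  finally show "JJ a b y \<le> Beta a b" .
qed

lemma cont: "r > 0 \<Longrightarrow> q > (0::real) \<Longrightarrow> y \<le> 1 \<Longrightarrow> continuous_on {0..y} (\<lambda>t. t powr r * (1-t) powr q)"
  by (intro continuous_intros continuous_on_powr') auto

lemma der: "r > 0 \<Longrightarrow> q > (0::real) \<Longrightarrow> 0 < t \<Longrightarrow> t < 1 \<Longrightarrow>
  ((\<lambda>t. t powr r * (1-t) powr q) has_real_derivative
    (r * (t powr (r - 1) * (1 - t) powr (q + 1 - 1)) - q * (t powr (r + 1 - 1) * (1 - t) powr (q - 1)))) (at t)"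
  by (rule derivative_eq_intros refl | simp)+

lemma JJ_rec:
  assumes "r > 0" "q > 0" "0 \<le> (y::real)" "y \<le> 1"
  shows "(r + q) * JJ (r + 1) q y = r * JJ r q y - y powr r * (1 - y) powr q"
proof -
  have ftc: "((\<lambda>t. r * (t powr (r - 1) * (1 - t) powr (q + 1 - 1)) - q * (t powr (r + 1 - 1) * (1 - t) powr (q - 1)))
     has_integral (y powr r * (1 - y) powr q - 0 powr r * (1 - 0) powr q)) {0..y}"
    apply (rule fundamental_theorem_of_calculus_interior)
    using assms apply simp
    apply (rule cont) using assms apply auto[3]
  proof -
    fix x assume "x \<in> {0<..<y}"
    then have "0 < x" "x < 1" using assms by auto
    from der[OF assms(1,2) this] show "((\<lambda>t. t powr r * (1-t) powr q) has_vector_derivative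
      (r * (x powr (r - 1) * (1 - x) powr (q + 1 - 1)) - q * (x powr (r + 1 - 1) * (1 - x) powr (q - 1)))) (at x)"
      by (simp add: has_real_derivative_iff_has_vector_derivative)
  qed
  have i1: "(\<lambda>t. t powr (r - 1) * (1 - t) powr (q + 1 - 1)) integrable_on {0..y}"
    by (rule JJ_int) (use assms in auto)
  have i2: "(\<lambda>t. t powr (r + 1 - 1) * (1 - t) powr (q - 1)) integrable_on {0..y}"
    by (rule JJ_int) (use assms in auto)
  have "r * JJ r (q + 1) y - q * JJ (r + 1) q y = y powr r * (1 - y) powr q"
  proof -
    have "integral {0..y} (\<lambda>t. r * (t powr (r - 1) * (1 - t) powr (q + 1 - 1)) - q * (t powr (r + 1 - 1) * (1 - t) powr (q - 1)))
      = r * JJ r (q + 1) y - q * JJ (r + 1) q y"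
      unfolding JJ_def
      apply (subst integral_diff)
      using i1 i2 assms by (auto simp: integrable_on_cmult_iff)
    then show ?thesis using integral_unique[OF ftc] assms by simp
  qed
  moreover have "JJ (r + 1) q y + JJ r (q + 1) y = JJ r q y"
  proof -
    have "JJ (r + 1) q y + JJ r (q + 1) y = integral {0..y}
      (\<lambda>t. t powr (r + 1 - 1) * (1 - t) powr (q - 1) + t powr (r - 1) * (1 - t) powr (q + 1 - 1))"
      unfolding JJ_def using i1 i2 by (simp add: integral_add)
    also have "\<dots> = JJ r q y" unfolding JJ_def
    proof (rule integral_cong)
      fix t assume t: "t \<in> {0..y}"
      have a: "t powr r = t * t powr (r - 1)"
        using t powr_add[of t "r - 1" 1] by (cases "t = 0") auto
      have b: "(1 - t) powr q = (1 - t) * (1 - t) powr (q - 1)"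
        using t assms powr_add[of "1 - t" "q - 1" 1] by (cases "t = 1") auto
      show "t powr (r + 1 - 1) * (1 - t) powr (q - 1) + t powr (r - 1) * (1 - t) powr (q + 1 - 1) =
          t powr (r - 1) * (1 - t) powr (q - 1)"
        by (simp add: a b algebra_simps)
    qed
    finally show ?thesis .
  qed
  ultimately have h1: "r * JJ r (q + 1) y - q * JJ (r + 1) q y = y powr r * (1 - y) powr q"
    and h2: "JJ (r + 1) q y + JJ r (q + 1) y = JJ r q y" by auto
  have h3: "r * JJ r q y = r * JJ (r + 1) q y + r * JJ r (q + 1) y"
    by (simp only: h2[symmetric] distrib_left)
  have h4: "(r + q) * JJ (r + 1) q y = r * JJ (r + 1) q y + q * JJ (r + 1) q y"
    by (simp only: distrib_right)
  show ?thesis using h1 h3 h4 by linarith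
qed

lemma Beta_pos: "a > 0 \<Longrightarrow> b > 0 \<Longrightarrow> Beta a b > (0::real)"
  unfolding Beta_def by (simp add: Gamma_real_pos)

lemma inc_JJ: "inc_beta_reg r q y = JJ r q y / Beta r q"
  unfolding inc_beta_reg_def JJ_def by simp

definition dB :: "real \<Rightarrow> real \<Rightarrow> real \<Rightarrow> real" where
  "dB r q y = y powr r * (1 - y) powr q / (r * Beta r q)"

lemma u_rec:
  assumes "r > 0" "q > 0" "0 \<le> (y::real)" "y \<le> 1"
  shows "inc_beta_reg (r + 1) q y = inc_beta_reg r q y - dB r q y"
proof -
  have B: "(r + q) * Beta (r + 1) q = r * Beta r q" using assms by (intro Beta_plus1_left) auto
  have Bp: "Beta r q > 0" using assms by (simp add: Beta_pos)
  have b1: "Beta (r + 1) q = r * Beta r q / (r + q)" using B assms by (simp add: field_simps)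
  have j1: "JJ (r + 1) q y = (r * JJ r q y - y powr r * (1 - y) powr q) / (r + q)"
    using JJ_rec[OF assms] assms by (simp add: field_simps)
  have alg: "((r*J - w)/(r+q)) / (r*B/(r+q)) = J/B - w/(r*B)" if "B \<noteq> 0" for J w B :: real
  proof -
    have l1: "(c::real) \<noteq> 0 \<Longrightarrow> (a/c)/(b/c) = a/b" for a b c by simp
    have "((r*J - w)/(r+q)) / (r*B/(r+q)) = (r*J - w)/(r*B)" by (rule l1) (use assms in simp)
    also have "\<dots> = J/B - w/(r*B)" using assms that by (simp add: diff_divide_distrib)
    finally show ?thesis .
  qed
  show ?thesis unfolding inc_JJ dB_def b1 j1 using alg Bp by simp
qed

lemma d_rec:
  assumes "r > 0" "q > 0" "0 \<le> (y::real)" "y \<le> 1"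
  shows "(r + 1) * dB (r + 1) q y = y * (r + q) * dB r q y"
proof -
  have B: "(r + q) * Beta (r + 1) q = r * Beta r q" using assms by (intro Beta_plus1_left) auto
  have Bp: "Beta r q > 0" using assms by (simp add: Beta_pos)
  have b1: "Beta (r + 1) q = r * Beta r q / (r + q)" using B assms by (simp add: field_simps)
  have y1: "y powr (r + 1) = y * y powr r"
    using assms powr_add[of y r 1] by (cases "y = 0") auto
  have alg: "(r+1)*((y*w)/((r+1)*(r*B/(r+q)))) = y*(r+q)*(w/(r*B))" if "B \<noteq> 0" for w B :: real
  proof -
    have "(r+1)*((y*w)/((r+1)*(r*B/(r+q)))) = (y*w)/(r*B/(r+q))" using assms that by simp
    also have "\<dots> = y*(r+q)*(w/(r*B))" using assms that by simp
    finally show ?thesis .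
  qed
  have Bne: "Beta r q \<noteq> 0" using Bp by simp
  have "(r+1)*((y*(y powr r * (1 - y) powr q))/((r+1)*(r*Beta r q/(r+q)))) = y*(r+q)*((y powr r * (1 - y) powr q)/(r*Beta r q))"
    by (rule alg[OF Bne])
  then show ?thesis unfolding dB_def b1 y1 by (simp only: mult.assoc)
qed

lemma u_bounds:
  assumes "r > 0" "q > 0" "0 \<le> (y::real)" "y \<le> 1"
  shows "0 \<le> inc_beta_reg r q y" "inc_beta_reg r q y \<le> 1"
  unfolding inc_JJ using JJ_bounds[OF assms] Beta_pos[OF assms(1,2)]
  by (auto simp: field_simps)

lemma shift_sum:
  fixes a :: real and h :: "nat \<Rightarrow> real"
  assumes "summable (\<lambda>j. a ^ j / fact j * h (Suc j))"
  shows "(\<lambda>j. a ^ j / fact j * real j * h j) sums (a * (\<Sum>j. a ^ j / fact j * h (Suc j)))"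
proof -
  have eq: "(\<lambda>j. a ^ Suc j / fact (Suc j) * real (Suc j) * h (Suc j)) = (\<lambda>j. a * (a ^ j / fact j * h (Suc j)))"
    by (rule ext) (simp add: field_simps del: of_nat_Suc)
  have "(\<lambda>j. a * (a ^ j / fact j * h (Suc j))) sums (a * (\<Sum>j. a ^ j / fact j * h (Suc j)))"
    by (intro sums_mult summable_sums assms)
  then have "(\<lambda>j. a ^ Suc j / fact (Suc j) * real (Suc j) * h (Suc j)) sums (a * (\<Sum>j. a ^ j / fact j * h (Suc j)))"
    by (simp only: eq)
  then show ?thesis by (subst (asm) sums_Suc_iff) simp
qed

theorem mainTheorem7:
  fixes p q x y :: real
  assumes "p > 0" and "q > 0" and "x \<ge> 0" and "0 \<le> y" and "y \<le> 1"
  defines "c0 \<equiv> (p + q) * y^2"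
      and "c1 \<equiv> - y * (p + 1 - x * y / 2 + y * (p + q))"
      and "c2 \<equiv> y * (p + 1 - x * y / 2) - x * y / 2"
      and "c3 \<equiv> x * y / 2"
  shows "c3 * nc_beta (p + 3) q x y + c2 * nc_beta (p + 2) q x y
           + c1 * nc_beta (p + 1) q x y + c0 * nc_beta p q x y = 0
       \<and> c3 * nc_beta_compl (p + 3) q x y + c2 * nc_beta_compl (p + 2) q x y
           + c1 * nc_beta_compl (p + 1) q x y + c0 * nc_beta_compl p q x y = 0"
proof -
  define a where "a = x / 2"
  define v where "v n = inc_beta_reg (p + real n) q y" for n
  define dd where "dd n = dB (p + real n) q y" for n
  have a0: "a \<ge> 0" using assms(3) by (simp add: a_def)
  have pn: "p + real n > 0" for n using assms(1) by simp
  have vrec: "v (Suc n) = v n - dd n" for n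
  proof -
    have e: "p + real (Suc n) = (p + real n) + 1" by simp
    show ?thesis unfolding v_def dd_def e by (rule u_rec[OF pn assms(2,4,5)])
  qed
  have drec: "(p + real n + 1) * dd (Suc n) = y * (p + real n + q) * dd n" for n
  proof -
    have e: "p + real (Suc n) = (p + real n) + 1" by simp
    show ?thesis unfolding dd_def e by (rule d_rec[OF pn assms(2,4,5)])
  qed
  have esum: "(\<lambda>j. a^j / fact j) sums exp a"
    using exp_converges[of a] by (simp add: divide_inverse mult.commute)
  have Ssum: "summable (\<lambda>j. a^j / fact j * v (k + j))" for k
  proof (rule summable_comparison_test')
    show "summable (\<lambda>j. a^j / fact j)" using esum by (rule sums_summable)
    fix j :: nat
    have "0 \<le> v (k + j)" "v (k + j) \<le> 1" unfolding v_def using u_bounds[OF pn[of "k + j"] assms(2,4,5)] by auto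
    moreover have "0 \<le> a^j / fact j" using a0 by simp
    ultimately have "norm (a^j / fact j * v (k + j)) = a^j / fact j * v (k + j)"
      unfolding real_norm_def by (intro abs_of_nonneg mult_nonneg_nonneg)
    also have "\<dots> \<le> a^j / fact j" using \<open>v (k + j) \<le> 1\<close> \<open>0 \<le> a^j / fact j\<close> by (rule mult_left_le)
    finally show "norm (a^j / fact j * v (k + j)) \<le> a^j / fact j" .
  qed
  define S where "S k = (\<Sum>j. a^j / fact j * v (k + j))" for k
  define T where "T k = S k - S (Suc k)" for k
  have Tsum: "(\<lambda>j. a^j / fact j * dd (k + j)) sums T k" for k
  proof -
    have "(\<lambda>j. a^j / fact j * v (k + j) - a^j / fact j * v (Suc k + j)) sums (S k - S (Suc k))"
      unfolding S_def by (intro sums_diff summable_sums Ssum)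
    moreover have "(\<lambda>j. a^j / fact j * v (k + j) - a^j / fact j * v (Suc k + j)) = (\<lambda>j. a^j / fact j * dd (k + j))"
      by (rule ext) (simp add: vrec algebra_simps)
    ultimately show ?thesis unfolding T_def by simp
  qed
  have T2: "(\<Sum>j. a^j / fact j * dd (1 + Suc j)) = T 2"
  proof -
    have "(\<lambda>j. a^j / fact j * dd (1 + Suc j)) = (\<lambda>j. a^j / fact j * dd (2 + j))" by simp
    then show ?thesis using sums_unique[OF Tsum[of 2]] by simp
  qed
  have T1: "(\<Sum>j. a^j / fact j * dd (Suc j)) = T 1"
  proof -
    have "(\<lambda>j. a^j / fact j * dd (Suc j)) = (\<lambda>j. a^j / fact j * dd (1 + j))" by simp
    then show ?thesis using sums_unique[OF Tsum[of 1]] by simp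
  qed
  have sh1: "(\<lambda>j. a^j / fact j * real j * dd (1 + j)) sums (a * T 2)"
  proof -
    have "summable (\<lambda>j. a^j / fact j * dd (1 + Suc j))"
    proof -
      have "(\<lambda>j. a^j / fact j * dd (1 + Suc j)) = (\<lambda>j. a^j / fact j * dd (2 + j))" by simp
      then show ?thesis using sums_summable[OF Tsum[of 2]] by simp
    qed
    from shift_sum[OF this] show ?thesis by (simp only: T2)
  qed
  have sh0: "(\<lambda>j. a^j / fact j * real j * dd j) sums (a * T 1)"
  proof -
    have "summable (\<lambda>j. a^j / fact j * dd (Suc j))"
    proof -
      have "(\<lambda>j. a^j / fact j * dd (Suc j)) = (\<lambda>j. a^j / fact j * dd (1 + j))" by simp
      then show ?thesis using sums_summable[OF Tsum[of 1]] by simp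
    qed
    from shift_sum[OF this] show ?thesis by (simp only: T1)
  qed
  have L: "(\<lambda>j. (p + 1) * (a^j / fact j * dd (1 + j)) + a^j / fact j * real j * dd (1 + j))
      sums ((p + 1) * T 1 + a * T 2)"
    by (intro sums_add sums_mult Tsum sh1)
  have R: "(\<lambda>j. y * (p + q) * (a^j / fact j * dd (0 + j)) + y * (a^j / fact j * real j * dd j))
      sums (y * (p + q) * T 0 + y * (a * T 1))"
    by (intro sums_add sums_mult Tsum sh0)
  have LR: "(\<lambda>j. (p + 1) * (a^j / fact j * dd (1 + j)) + a^j / fact j * real j * dd (1 + j))
      = (\<lambda>j. y * (p + q) * (a^j / fact j * dd (0 + j)) + y * (a^j / fact j * real j * dd j))"
  proof (rule ext)
    fix j
    have "(p + 1) * (a^j / fact j * dd (1 + j)) + a^j / fact j * real j * dd (1 + j)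
        = a^j / fact j * ((p + real j + 1) * dd (Suc j))" by (simp add: algebra_simps add_divide_distrib)
    also have "\<dots> = a^j / fact j * (y * (p + real j + q) * dd j)" by (simp only: drec)
    also have "\<dots> = y * (p + q) * (a^j / fact j * dd (0 + j)) + y * (a^j / fact j * real j * dd j)"
      by (simp add: algebra_simps add_divide_distrib)
    finally show "(p + 1) * (a^j / fact j * dd (1 + j)) + a^j / fact j * real j * dd (1 + j)
      = y * (p + q) * (a^j / fact j * dd (0 + j)) + y * (a^j / fact j * real j * dd j)" .
  qed
  have key: "(p + 1) * T 1 + a * T 2 = y * (p + q) * T 0 + y * (a * T 1)"
    using L R unfolding LR using sums_unique2 by blast
  have nc: "nc_beta (p + real k) q x y = exp (- a) * S k" for k
    unfolding nc_beta_def S_def v_def a_def by (simp add: add.assoc)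
  have n0: "nc_beta p q x y = exp (- a) * S 0" using nc[of 0] by simp
  have n1: "nc_beta (p + 1) q x y = exp (- a) * S 1" using nc[of 1] by simp
  have n2: "nc_beta (p + 2) q x y = exp (- a) * S 2" using nc[of 2] by simp
  have n3: "nc_beta (p + 3) q x y = exp (- a) * S 3" using nc[of 3] by simp
  have xa: "x = 2 * a" by (simp add: a_def)
  have Tv: "T 0 = S 0 - S 1" "T 1 = S 1 - S 2" "T 2 = S 2 - S 3"
    unfolding T_def by (simp_all add: numeral_2_eq_2 numeral_3_eq_3)
  have br: "c3 * S 3 + c2 * S 2 + c1 * S 1 + c0 * S 0
      = - y * (((p + 1) * T 1 + a * T 2) - (y * (p + q) * T 0 + y * (a * T 1)))"
    unfolding Tv c0_def c1_def c2_def c3_def xa by (simp add: algebra_simps power2_eq_square)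
  have first: "c3 * nc_beta (p + 3) q x y + c2 * nc_beta (p + 2) q x y
           + c1 * nc_beta (p + 1) q x y + c0 * nc_beta p q x y = 0"
  proof -
    have "c3 * nc_beta (p + 3) q x y + c2 * nc_beta (p + 2) q x y
           + c1 * nc_beta (p + 1) q x y + c0 * nc_beta p q x y
        = exp (- a) * (c3 * S 3 + c2 * S 2 + c1 * S 1 + c0 * S 0)"
      unfolding n0 n1 n2 n3 by (simp add: algebra_simps)
    also have "\<dots> = 0" unfolding br key by simp
    finally show ?thesis .
  qed
  have csum: "c0 + c1 + c2 + c3 = 0"
    unfolding c0_def c1_def c2_def c3_def by (simp add: algebra_simps power2_eq_square)
  have "c3 * nc_beta_compl (p + 3) q x y + c2 * nc_beta_compl (p + 2) q x y
           + c1 * nc_beta_compl (p + 1) q x y + c0 * nc_beta_compl p q x y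
      = (c0 + c1 + c2 + c3) - (c3 * nc_beta (p + 3) q x y + c2 * nc_beta (p + 2) q x y
           + c1 * nc_beta (p + 1) q x y + c0 * nc_beta p q x y)"
    unfolding nc_beta_compl_def by (simp add: algebra_simps)
  also have "\<dots> = 0" unfolding csum first by simp
  finally show ?thesis using first by simp
qed

end
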